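(* Let $\mathcal A\in\mathbb C^{n\times n}$ be nonsingular and suppose $\mathcal A=\mathcal P_1+\mathcal P_2$ with $\mathcal P_1,\mathcal P_2$ positive semidefinite, and let $\Sigma$ be Hermitian positive definite. Let $\tilde{\mathcal A}=\Sigma^{-1/2}\mathcal A\Sigma^{-1/2}$ and, for $x\in\mathbb C^n$, $$r_1(x):=x^*\big(\mathcal I+\tilde{\mathcal A}^*\tilde{\mathcal A}+\tilde{\mathcal P}_2\tilde{\mathcal P}_1+\tilde{\mathcal P}_1^*\tilde{\mathcal P}_2^*+\tilde{\mathcal P}_1^*\tilde{\mathcal P}_2^*\tilde{\mathcal P}_2\tilde{\mathcal P}_1\big)x,\qquad r_2(x):=x^*\big(\tilde{\mathcal A}+\tilde{\mathcal A}^*+\tilde{\mathcal A}^*\tilde{\mathcal P}_2\tilde{\mathcal P}_1+\tilde{\mathcal P}_1^*\tilde{\mathcal P}_2^*\tilde{\mathcal A}\big)x.$$ Then for all $x_\lambda\in\mathrm{ev}(\tilde{\mathcal P}_+^{-1}\tilde{\mathcal P}_-)$ we have $r_1(x_\lambda)\ge r_2(x_\lambda)\ge 0$ and $r_1(x_\lambda)>0$, and $$\rho(\Gamma_{\mathrm{PPS}})=\max_{x_\lambda\in\mathrm{ev}(\tilde{\mathcal P}_+^{-1}\tilde{\mathcal P}_-)}\sqrt{\frac{r_1(x_\lambda)-r_2(x_\lambda)}{r_1(x_\lambda)+r_2(x_\lambda)}}.$$ In particular, $\rho(\Gamma_{\mathrm{PPS}})<1$ if and only if $r_2(x_\lambda)\ne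 0$ for all $x_\lambda\in\mathrm{ev}(\tilde{\mathcal P}_+^{-1}\tilde{\mathcal P}_-)$.
   Context: A matrix $\mathcal P\in\mathbb C^{n\times n}$ is called positive semidefinite if $\mathcal P+\mathcal P^*$ is Hermitian positive semidefinite, and positive definite if $\mathcal P+\mathcal P^*$ is Hermitian positive definite; $\mathcal P$ need not be Hermitian. $\mathcal I$ is the identity, $\rho(\cdot)$ the spectral radius, and $\mathrm{ev}(M)$ the set of all nonzero eigenvectors of a square matrix $M$. For HPD $\Sigma$, $\Sigma^{1/2}$ is its HPD square root. The PPS iteration matrix is $\Gamma_{\mathrm{PPS}}=(\Sigma+\mathcal P_1)^{-1}(\Sigma-\mathcal P_2)(\Sigma+\mathcal P_2)^{-1}(\Sigma-\mathcal P_1)$. Set $\tilde{\mathcal P}_i=\Sigma^{-1/2}\mathcal P_i\Sigma^{-1/2}$ ($i=1,2$), $\tilde{\mathcal P}_+=(\mathcal I+\tilde{\mathcal P}_2)(\mathcal I+\tilde{\mathcal P}_1)$, $\tilde{\mathcal P}_-=(\mathcal I-\tilde{\mathcal P}_2)(\mathcal I-\tilde{\mathcal P}_1)$. *)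

theory Defs
  imports "Jordan_Normal_Form.Spectral_Radius" "Jordan_Normal_Form.Schur_Decomposition"
begin

abbreviation adj :: "complex mat \<Rightarrow> complex mat" where
  "adj A \<equiv> mat_adjoint A"

(* quadratic form x^* H x *)
definition qform :: "complex mat \<Rightarrow> complex vec \<Rightarrow> complex" where
  "qform H x = (H *\<^sub>v x) \<bullet>c x"

definition hermitian_mat :: "complex mat \<Rightarrow> bool" where
  "hermitian_mat H \<longleftrightarrow> adj H = H"

definition hermitian_psd :: "nat \<Rightarrow> complex mat \<Rightarrow> bool" where
  "hermitian_psd n H \<longleftrightarrow> H \<in> carrier_mat n n \<and> hermitian_mat H \<and>
     (\<forall>x \<in> carrier_vec n. Re (qform H x) \<ge> 0)"

definition hermitian_pd :: "nat \<Rightarrow> complex mat \<Rightarrow> bool" where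
  "hermitian_pd n H \<longleftrightarrow> H \<in> carrier_mat n n \<and> hermitian_mat H \<and>
     (\<forall>x \<in> carrier_vec n. x \<noteq> 0\<^sub>v n \<longrightarrow> Re (qform H x) > 0)"

(* the paper's (non-Hermitian) notion: P + P^* is Hermitian psd *)
definition pos_semidef :: "nat \<Rightarrow> complex mat \<Rightarrow> bool" where
  "pos_semidef n P \<longleftrightarrow> P \<in> carrier_mat n n \<and> hermitian_psd n (P + adj P)"

definition minv :: "nat \<Rightarrow> complex mat \<Rightarrow> complex mat" where
  "minv n A = (THE B. B \<in> carrier_mat n n \<and> A * B = 1\<^sub>m n \<and> B * A = 1\<^sub>m n)"

definition msqrt :: "nat \<Rightarrow> complex mat \<Rightarrow> complex mat" where
  "msqrt n S = (THE R. hermitian_pd n R \<and> R * R = S)"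

definition ev :: "complex mat \<Rightarrow> complex vec set" where
  "ev M = {x. \<exists>k. eigenvector M x k}"

definition Gamma_PPS :: "nat \<Rightarrow> complex mat \<Rightarrow> complex mat \<Rightarrow> complex mat \<Rightarrow> complex mat" where
  "Gamma_PPS n S P1 P2 =
     minv n (S + P1) * (S - P2) * minv n (S + P2) * (S - P1)"

definition tld :: "nat \<Rightarrow> complex mat \<Rightarrow> complex mat \<Rightarrow> complex mat" where
  "tld n S M = minv n (msqrt n S) * M * minv n (msqrt n S)"

definition Pplus :: "nat \<Rightarrow> complex mat \<Rightarrow> complex mat \<Rightarrow> complex mat \<Rightarrow> complex mat" where
  "Pplus n S P1 P2 = (1\<^sub>m n + tld n S P2) * (1\<^sub>m n + tld n S P1)"

definition Pminus :: "nat \<Rightarrow> complex mat \<Rightarrow> complex mat \<Rightarrow> complex mat \<Rightarrow> complex mat" where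
  "Pminus n S P1 P2 = (1\<^sub>m n - tld n S P2) * (1\<^sub>m n - tld n S P1)"

(* r_1(x), r_2(x); the underlying Hermitian forms are real, we take the real part *)
definition r1 :: "nat \<Rightarrow> complex mat \<Rightarrow> complex mat \<Rightarrow> complex mat \<Rightarrow> complex vec \<Rightarrow> real" where
  "r1 n S P1 P2 x = (let At = tld n S (P1 + P2); P1t = tld n S P1; P2t = tld n S P2 in
     Re (qform (1\<^sub>m n + adj At * At + P2t * P1t + adj P1t * adj P2t
                + adj P1t * adj P2t * P2t * P1t) x))"

definition r2 :: "nat \<Rightarrow> complex mat \<Rightarrow> complex mat \<Rightarrow> complex mat \<Rightarrow> complex vec \<Rightarrow> real" where
  "r2 n S P1 P2 x = (let At = tld n S (P1 + P2); P1t = tld n S P1; P2t = tld n S P2 in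
     Re (qform (At + adj At + adj At * P2t * P1t + adj P1t * adj P2t * At) x))"

end

theory Submission
  imports Defs
begin

lemma adj_dims[simp]: "dim_row (adj A) = dim_col A" "dim_col (adj A) = dim_row A"
  unfolding mat_adjoint_def by auto

lemma adj_index[simp]: "i < dim_col A \<Longrightarrow> j < dim_row A \<Longrightarrow> adj A $$ (i,j) = cnj (A $$ (j,i))"
  unfolding mat_adjoint_def by (simp add: mat_of_rows_index)

lemma adj_carrier[simp]: "A \<in> carrier_mat n m \<Longrightarrow> adj A \<in> carrier_mat m n"
  by auto

lemma adj_adj[simp]: "adj (adj A) = A"
  by (rule eq_matI, auto)

lemma adj_mult: assumes "A \<in> carrier_mat n m" "B \<in> carrier_mat m k"
  shows "adj (A * B) = adj B * adj A"
  using assms by (intro eq_matI, auto simp: scalar_prod_def sum_conjugate intro!: sum.cong)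

lemma adj_add: assumes "A \<in> carrier_mat n m" "B \<in> carrier_mat n m"
  shows "adj (A + B) = adj A + adj B"
  using assms by (intro eq_matI, auto)

lemma adj_minus: assumes "A \<in> carrier_mat n m" "B \<in> carrier_mat n m"
  shows "adj (A - B) = adj A - adj B"
  using assms by (intro eq_matI, auto)

lemma adj_one[simp]: "adj (1\<^sub>m n) = 1\<^sub>m n"
  by (intro eq_matI, auto)

lemma adj_inner: assumes "A \<in> carrier_mat n m" "x \<in> carrier_vec n" "y \<in> carrier_vec m"
  shows "(adj A *\<^sub>v x) \<bullet>c y = x \<bullet>c (A *\<^sub>v y)"
proof -
  have "(adj A *\<^sub>v x) \<bullet>c y = (\<Sum>i<m. (\<Sum>k<n. cnj (A $$ (k,i)) * x $ k) * cnj (y $ i))"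
    using assms by (auto simp: scalar_prod_def lessThan_atLeast0 intro!: sum.cong)
  also have "\<dots> = (\<Sum>k<n. x $ k * cnj (\<Sum>i<m. A $$ (k,i) * y $ i))"
    by (simp add: sum_distrib_left sum_distrib_right sum_conjugate mult.commute mult.left_commute sum.swap[of _ "{..<m}"])
  also have "\<dots> = x \<bullet>c (A *\<^sub>v y)"
    using assms by (auto simp: scalar_prod_def lessThan_atLeast0 intro!: sum.cong)
  finally show ?thesis .
qed

lemma cscalar_self: assumes "x \<in> carrier_vec n"
  shows "x \<bullet>c x = complex_of_real (\<Sum>i<n. (cmod (x$i))^2)"
proof -
  have "x \<bullet>c x = (\<Sum>i<n. x$i * cnj (x$i))" using assms by (auto simp: scalar_prod_def lessThan_atLeast0)
  also have "\<dots> = (\<Sum>i<n. complex_of_real ((cmod (x$i))^2))"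
    by (rule sum.cong, simp, subst complex_norm_square, simp)
  finally show ?thesis by simp
qed

lemma cscalar_self_ge0: assumes "x \<in> carrier_vec n" shows "Re (x \<bullet>c x) \<ge> 0" "Im (x \<bullet>c x) = 0"
  using cscalar_self[OF assms] by (auto intro: sum_nonneg)

lemma cscalar_self_eq0: assumes "x \<in> carrier_vec n" shows "Re (x \<bullet>c x) = 0 \<longleftrightarrow> x = 0\<^sub>v n"
proof
  assume "Re (x \<bullet>c x) = 0"
  hence "(\<Sum>i<n. (cmod (x$i))^2) = 0" using cscalar_self[OF assms] by simp
  hence "\<forall>i\<in>{..<n}. (cmod (x$i))^2 = 0" by (subst sum_nonneg_eq_0_iff[symmetric], auto)
  thus "x = 0\<^sub>v n" using assms by (intro eq_vecI, auto)
qed (use assms in \<open>auto simp: scalar_prod_def\<close>)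

lemma cscalar_cnj: assumes "x \<in> carrier_vec n" "y \<in> carrier_vec n"
  shows "cnj (x \<bullet>c y) = y \<bullet>c x"
  using assms by (auto simp: scalar_prod_def sum_conjugate lessThan_atLeast0 mult.commute intro!: sum.cong)

lemma exists_inverse: assumes A: "(A::complex mat) \<in> carrier_mat n n"
  and inj: "\<And>v. v \<in> carrier_vec n \<Longrightarrow> A *\<^sub>v v = 0\<^sub>v n \<Longrightarrow> v = 0\<^sub>v n"
  shows "\<exists>B. B \<in> carrier_mat n n \<and> A * B = 1\<^sub>m n \<and> B * A = 1\<^sub>m n"
proof -
  have "det A \<noteq> 0" using det_0_iff_vec_prod_zero[OF A] inj by auto
  from det_non_zero_imp_unit[OF A this, of undefined]
  show ?thesis unfolding Units_def ring_mat_simps by auto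
qed

lemma minv_eq: assumes A: "(A::complex mat) \<in> carrier_mat n n" and B: "B \<in> carrier_mat n n"
  and AB: "A * B = 1\<^sub>m n"
  shows "minv n A = B"
proof -
  have BA: "B * A = 1\<^sub>m n" using mat_mult_left_right_inverse[OF A B AB] .
  show ?thesis unfolding minv_def
  proof (rule the_equality)
    fix C assume C: "C \<in> carrier_mat n n \<and> A * C = 1\<^sub>m n \<and> C * A = 1\<^sub>m n"
    have "C = (B * A) * C" using C BA left_mult_one_mat[of C n n] by simp
    also have "\<dots> = B * (A * C)" using A B C by (simp add: assoc_mult_mat[of _ n n _ n _ n])
    also have "\<dots> = B" using C B by simp
    finally show "C = B" .
  qed (use B AB BA in auto)
qed

lemma minv_props: assumes A: "(A::complex mat) \<in> carrier_mat n n"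
  and inj: "\<And>v. v \<in> carrier_vec n \<Longrightarrow> A *\<^sub>v v = 0\<^sub>v n \<Longrightarrow> v = 0\<^sub>v n"
  shows "minv n A \<in> carrier_mat n n" "A * minv n A = 1\<^sub>m n" "minv n A * A = 1\<^sub>m n"
proof -
  obtain B where B: "B \<in> carrier_mat n n" "A * B = 1\<^sub>m n" "B * A = 1\<^sub>m n"
    using exists_inverse[OF A inj] by blast
  have "minv n A = B" using minv_eq[OF A B(1,2)] .
  thus "minv n A \<in> carrier_mat n n" "A * minv n A = 1\<^sub>m n" "minv n A * A = 1\<^sub>m n" using B by auto
qed

definition nv :: "complex vec \<Rightarrow> complex vec" where
  "nv w = complex_of_real (1 / sqrt (Re (w \<bullet>c w))) \<cdot>\<^sub>v w"

lemma nv_carrier[simp]: "w \<in> carrier_vec n \<Longrightarrow> nv w \<in> carrier_vec n"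
  unfolding nv_def by auto

lemma nv_inner: assumes "w \<in> carrier_vec n" "u \<in> carrier_vec n"
  shows "nv w \<bullet>c nv u = complex_of_real (1 / sqrt (Re (w \<bullet>c w))) * complex_of_real (1 / sqrt (Re (u \<bullet>c u))) * (w \<bullet>c u)"
  using assms unfolding nv_def
  by (simp add: scalar_prod_smult_distrib smult_scalar_prod_distrib conjugate_smult_vec)

lemma nv_unit: assumes w: "w \<in> carrier_vec n" and w0: "w \<noteq> 0\<^sub>v n"
  shows "nv w \<bullet>c nv w = 1"
proof -
  define r where "r = Re (w \<bullet>c w)"
  have r: "r > 0" using cscalar_self_ge0[OF w] cscalar_self_eq0[OF w] w0 unfolding r_def by force
  have ww: "w \<bullet>c w = complex_of_real r" using cscalar_self_ge0(2)[OF w] unfolding r_def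
    by (simp add: complex_eq_iff)
  have "nv w \<bullet>c nv w = complex_of_real (1 / sqrt r * (1 / sqrt r) * r)"
    unfolding nv_inner[OF w w] ww r_def[symmetric] Re_complex_of_real by (simp only: of_real_mult[symmetric])
  also have "1 / sqrt r * (1 / sqrt r) * r = 1" using r
    by (simp add: field_simps)
  finally show ?thesis by simp
qed

lemma nv_id: assumes "w \<bullet>c w = 1" shows "nv w = w"
  unfolding nv_def assms by simp

lemma adj_four_block_one: assumes P: "P \<in> carrier_mat m m"
  shows "adj (four_block_mat (1\<^sub>m 1) (0\<^sub>m 1 m) (0\<^sub>m m 1) P) =
         four_block_mat (1\<^sub>m 1) (0\<^sub>m 1 m) (0\<^sub>m m 1) (adj P)"
  using P by (intro eq_matI, auto)

lemma unitary_schur: assumes A: "(A :: complex mat) \<in> carrier_mat n n"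
  shows "\<exists>P T. similar_mat_wit A T P (adj P) \<and> upper_triangular T"
  using A
proof (induct n arbitrary: A)
  case 0
  hence "similar_mat_wit A A (1\<^sub>m 0) (adj (1\<^sub>m 0))" using similar_mat_wit_refl[OF 0] by simp
  moreover have "upper_triangular A" using 0 by (auto simp: upper_triangular_def)
  ultimately show ?case by blast
next
  case (Suc m A)
  define n where "n = Suc m"
  have A: "A \<in> carrier_mat n n" using Suc n_def by auto
  have n: "n \<noteq> 0" "0 < n" unfolding n_def by auto
  from spectrum_non_empty[OF A n(2)] obtain e where "eigenvalue A e" unfolding spectrum_def by auto
  then obtain v0 where ev: "eigenvector A v0 e" unfolding eigenvalue_def by auto
  hence v0: "v0 \<in> carrier_vec n" "v0 \<noteq> 0\<^sub>v n" "A *\<^sub>v v0 = e \<cdot>\<^sub>v v0" using A unfolding eigenvector_def by auto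
  define v where "v = nv v0"
  have v: "v \<in> carrier_vec n" unfolding v_def using v0 by simp
  have vv: "v \<bullet>c v = 1" unfolding v_def using nv_unit[OF v0(1,2)] .
  have vnz: "v \<noteq> 0\<^sub>v n" using vv by (auto simp: scalar_prod_def)
  have eigen: "A *\<^sub>v v = e \<cdot>\<^sub>v v" unfolding v_def nv_def
    using mult_mat_vec[OF A v0(1)] v0(3) by (auto simp: smult_smult_assoc mult.commute)
  interpret cof_vec_space n "TYPE(complex)" .
  define b where "b = basis_completion v"
  define ws where "ws = gram_schmidt n b"
  from basis_completion[OF v vnz, folded b_def]
  have dist_b: "distinct b" 
    and indep: "\<not> lin_dep (set b)" and b: "set b \<subseteq> carrier_vec n" and hdb: "hd b = v" 
    and len_b: "length b = n" by auto
  from hdb len_b n obtain vs where bv: "b = v # vs" by (cases b, auto)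
  from gram_schmidt_result[OF b dist_b indep refl, folded ws_def]
  have ws: "set ws \<subseteq> carrier_vec n" "corthogonal ws" "length ws = n" 
    by (auto simp: len_b)
  from gram_schmidt_hd[OF v, of vs, folded bv] have hdws: "hd ws = v" unfolding ws_def .
  define us where "us = map nv ws"
  have us_len: "length us = n" unfolding us_def using ws by simp
  have us_car: "set us \<subseteq> carrier_vec n" unfolding us_def using ws by auto
  have wsnz: "ws ! i \<noteq> 0\<^sub>v n" if "i < n" for i
  proof
    assume "ws ! i = 0\<^sub>v n"
    hence "ws ! i \<bullet>c ws ! i = 0" by (auto simp: scalar_prod_def)
    thus False using corthogonalD[OF ws(2), of i i] that ws(3) by auto
  qed
  have us_unit: "us ! i \<bullet>c us ! i = 1" if "i < n" for i
    unfolding us_def using that ws wsnz[OF that] by (auto intro!: nv_unit)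
  have us_orth: "corthogonal us"
  proof
    fix i j assume i: "i < length us" and j: "j < length us"
    hence i': "i < n" and j': "j < n" using us_len by auto
    have wi: "ws ! i \<in> carrier_vec n" "ws ! j \<in> carrier_vec n" using ws i' j' by auto
    have ri: "Re (ws ! i \<bullet>c ws ! i) > 0" "Re (ws ! j \<bullet>c ws ! j) > 0"
      using cscalar_self_ge0(1)[OF wi(1)] cscalar_self_eq0[OF wi(1)] wsnz[OF i']
        cscalar_self_ge0(1)[OF wi(2)] cscalar_self_eq0[OF wi(2)] wsnz[OF j'] by force+
    have "us ! i \<bullet>c us ! j = 0 \<longleftrightarrow> ws ! i \<bullet>c ws ! j = 0"
      unfolding us_def using i' j' ws(3) nv_inner[OF wi] ri by auto
    thus "us ! i \<bullet>c us ! j = 0 \<longleftrightarrow> i \<noteq> j" using corthogonalD[OF ws(2)] i' j' ws(3) by auto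
  qed
  have hdus: "hd us = v" unfolding us_def using hdws ws(3) n nv_id[OF vv]
    by (cases ws, auto)
  define W where "W = mat_of_cols n us"
  define W' where "W' = corthogonal_inv W"
  have W: "W \<in> carrier_mat n n" using us_car us_len unfolding W_def by auto
  have W'adj: "W' = adj W"
  proof -
    have "map vec_inv (cols W) = map conjugate (cols W)"
    proof (rule map_cong[OF refl])
      fix c assume "c \<in> set (cols W)"
      hence "c \<in> set us" unfolding W_def using us_car by simp
      then obtain i where "i < n" "c = us ! i" using us_len by (auto simp: in_set_conv_nth)
      thus "vec_inv c = conjugate c" using us_unit unfolding vec_inv_def by simp
    qed
    thus ?thesis unfolding W'_def corthogonal_inv_def mat_adjoint_def
      by (rule arg_cong[where f="mat_of_rows (dim_row W)"])
  qed
  have W': "W' \<in> carrier_mat n n" unfolding W'adj using W by simp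
  have orth_W: "corthogonal_mat W" using orthogonal_mat_of_cols us_car us_orth us_len unfolding W_def by auto
  from corthogonal_inv_result[OF orth_W] 
  have W'W: "W' * W = 1\<^sub>m n" unfolding W'_def[symmetric] inverts_mat_def using W' by auto
  hence WW': "W * W' = 1\<^sub>m n" using mat_mult_left_right_inverse[OF W' W] by auto
  define A' where "A' = W' * A * W"
  have A': "A' \<in> carrier_mat n n" using W W' A unfolding A'_def by auto
  have A'A_wit: "similar_mat_wit A' A W' W"
    by (rule similar_mat_witI[of _ _ n], insert W W' A A' W'W WW', auto simp: A'_def)
  from similar_mat_wit_sym[OF A'A_wit] have simAA': "similar_mat_wit A A' W W'" by auto
  let ?f = "(\<lambda> i. if i = 0 then e else 0)"
  have col0: "col A' 0 = vec n ?f"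
    unfolding A'_def W'_def W_def
    using corthogonal_col_ev_0[OF A v vnz eigen n(1) hdus us_car us_orth us_len] .
  let ?n1 = "n - 1"
  obtain A1 A2 A0 A3 where splitA': "split_block A' 1 1 = (A1,A2,A0,A3)"
    by (cases "split_block A' 1 1", auto)
  from A' n have "dim_row A' = 1 + ?n1" "dim_col A' = 1 + ?n1" by auto
  from split_block[OF splitA' this] have A2: "A2 \<in> carrier_mat 1 ?n1"
    and A3: "A3 \<in> carrier_mat ?n1 ?n1" 
    and A'block: "A' = four_block_mat A1 A2 A0 A3" by auto
  have A1id: "A1 = mat 1 1 (\<lambda> _. e)"
    using splitA'[unfolded split_block_def Let_def] arg_cong[OF col0, of "\<lambda> v. v $ 0"] A' n
    by (auto simp: col_def)
  have A1: "A1 \<in> carrier_mat 1 1" unfolding A1id by auto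
  {
    fix i
    assume "i < ?n1"
    with arg_cong[OF col0, of "\<lambda> v. v $ Suc i"] A'
    have "A' $$ (Suc i, 0) = 0" by auto
  } note A'0 = this
  have A0id: "A0 = 0\<^sub>m ?n1 1"
    using splitA'[unfolded split_block_def Let_def] A'0 A' by auto
  have A0: "A0 \<in> carrier_mat ?n1 1" unfolding A0id by auto
  have A3m: "A3 \<in> carrier_mat m m" using A3 unfolding n_def by simp
  from Suc(1)[OF A3m] obtain P' B where simIH: "similar_mat_wit A3 B P' (adj P')"
    and ut: "upper_triangular B" by auto
  from similar_mat_witD2[OF A3 simIH] 
  have B: "B \<in> carrier_mat ?n1 ?n1" and P': "P' \<in> carrier_mat ?n1 ?n1"
    and PQ': "P' * adj P' = 1\<^sub>m ?n1" by auto
  have A0_eq: "A0 = P' * A0 * 1\<^sub>m 1" unfolding A0id using P' by auto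
  let ?P' = "four_block_mat (1\<^sub>m 1) (0\<^sub>m 1 ?n1) (0\<^sub>m ?n1 1) P'"
  let ?Q' = "four_block_mat (1\<^sub>m 1) (0\<^sub>m 1 ?n1) (0\<^sub>m ?n1 1) (adj P')"
  define C where "C = four_block_mat A1 (A2 * P') A0 B"
  have simA'C: "similar_mat_wit A' C ?P' ?Q'" unfolding A'block C_def
    by (rule similar_mat_wit_four_block[OF similar_mat_wit_refl[OF A1] simIH _ A0_eq A1 A3 A0],
    insert PQ' A2 P', auto simp: assoc_mult_mat[of _ 1 ?n1 _ ?n1 _ ?n1])
  have ut1: "upper_triangular A1" unfolding A1id by auto
  have utC: "upper_triangular C" unfolding C_def A0id
    by (intro upper_triangular_four_block[OF _ B ut1 ut], auto simp: A1id)
  have sim: "similar_mat_wit A C (W * ?P') (?Q' * W')"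
    using similar_mat_wit_trans[OF simAA' simA'C] .
  have P'c: "?P' \<in> carrier_mat n n" using P' n by auto
  have "adj (W * ?P') = ?Q' * W'"
    unfolding adj_mult[OF W P'c] W'adj adj_four_block_one[OF P'] ..
  thus ?case using sim utC by metis
qed

lemma qform_conj: assumes Q: "Q \<in> carrier_mat k n" and H: "H \<in> carrier_mat k k" and x: "x \<in> carrier_vec n"
  shows "qform (adj Q * H * Q) x = qform H (Q *\<^sub>v x)"
proof -
  have "(adj Q * H * Q) *\<^sub>v x = adj Q *\<^sub>v (H *\<^sub>v (Q *\<^sub>v x))"
  proof -
    have "(adj Q * H * Q) *\<^sub>v x = (adj Q * H) *\<^sub>v (Q *\<^sub>v x)"
      using Q H x by (intro assoc_mult_mat_vec[of _ n k], auto)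
    also have "\<dots> = adj Q *\<^sub>v (H *\<^sub>v (Q *\<^sub>v x))"
      using Q H x by (intro assoc_mult_mat_vec[of _ n k], auto)
    finally show ?thesis .
  qed
  thus ?thesis unfolding qform_def using adj_inner[OF Q, of "H *\<^sub>v (Q *\<^sub>v x)" x] Q H x by simp
qed

lemma qform_add: assumes "A \<in> carrier_mat n n" "B \<in> carrier_mat n n" "x \<in> carrier_vec n"
  shows "qform (A + B) x = qform A x + qform B x"
  using assms unfolding qform_def by (simp add: add_mult_distrib_mat_vec add_scalar_prod_distrib[of _ n])

lemma sum_diag_comm: assumes A: "(A::complex mat) \<in> carrier_mat n n" and B: "B \<in> carrier_mat n n"
  shows "(\<Sum>i<n. (A * B) $$ (i,i)) = (\<Sum>i<n. (B * A) $$ (i,i))"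
proof -
  have "(\<Sum>i<n. (A * B) $$ (i,i)) = (\<Sum>i<n. \<Sum>k<n. A $$ (i,k) * B $$ (k,i))"
    using A B by (auto simp: scalar_prod_def lessThan_atLeast0 intro!: sum.cong)
  also have "\<dots> = (\<Sum>k<n. \<Sum>i<n. A $$ (i,k) * B $$ (k,i))"
    by (rule sum.swap)
  also have "\<dots> = (\<Sum>k<n. \<Sum>i<n. B $$ (k,i) * A $$ (i,k))"
    by (intro sum.cong refl) (simp add: mult.commute)
  also have "\<dots> = (\<Sum>i<n. (B * A) $$ (i,i))"
    using A B by (auto simp: scalar_prod_def lessThan_atLeast0 intro!: sum.cong)
  finally show ?thesis .
qed

lemma diag_DHD: assumes D: "D \<in> carrier_mat n n" and Dh: "adj D = D" and H: "H \<in> carrier_mat n n"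
  and i: "i < n"
  shows "(D * H * D) $$ (i,i) = qform H (col D i)"
proof -
  have Dc: "D $$ (i,k) = cnj (D $$ (k,i))" if "k < n" for k
    using arg_cong[OF Dh, of "\<lambda>M. M $$ (i,k)"] D i that by auto
  have "(D * H * D) $$ (i,i) = (\<Sum>k<n. D $$ (i,k) * (\<Sum>l<n. H $$ (k,l) * D $$ (l,i)))"
    using D H i by (simp add: scalar_prod_def lessThan_atLeast0)
  also have "\<dots> = (\<Sum>k<n. (\<Sum>l<n. H $$ (k,l) * D $$ (l,i)) * cnj (D $$ (k,i)))"
    by (intro sum.cong refl, simp add: Dc mult.commute)
  also have "\<dots> = qform H (col D i)"
    using D H i by (auto simp: qform_def scalar_prod_def lessThan_atLeast0 intro!: sum.cong)
  finally show ?thesis .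
qed

lemma hpd_sqrt_unique: assumes R1: "hermitian_pd n R1" and R2: "hermitian_pd n R2"
  and eq: "R1 * R1 = R2 * R2"
  shows "R1 = R2"
proof -
  have R1c: "R1 \<in> carrier_mat n n" and R2c: "R2 \<in> carrier_mat n n"
    and R1h: "adj R1 = R1" and R2h: "adj R2 = R2"
    using R1 R2 unfolding hermitian_pd_def hermitian_mat_def by auto
  define D where "D = R1 - R2"
  have Dc: "D \<in> carrier_mat n n" unfolding D_def using R1c R2c by auto
  have Dh: "adj D = D" unfolding D_def adj_minus[OF R1c R2c] R1h R2h ..
  have key: "R1 * D + D * R2 = 0\<^sub>m n n"
  proof -
    have "R1 * D + D * R2 = (R1 * R1 - R1 * R2) + (R1 * R2 - R2 * R2)"
      unfolding D_def using R1c R2c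
      by (simp add: mult_minus_distrib_mat[of _ n n] minus_mult_distrib_mat[of _ n n])
    also have "\<dots> = 0\<^sub>m n n" unfolding eq using R1c R2c by (intro eq_matI, auto)
    finally show ?thesis .
  qed
  have S0: "(\<Sum>i<n. (D * R1 * D) $$ (i,i)) + (\<Sum>i<n. (D * R2 * D) $$ (i,i)) = 0"
  proof -
    have "(\<Sum>i<n. (D * R2 * D) $$ (i,i)) = (\<Sum>i<n. (D * (D * R2)) $$ (i,i))"
      using sum_diag_comm[OF mult_carrier_mat[OF Dc R2c] Dc] Dc R2c
      by (simp add: assoc_mult_mat[of _ n n _ n _ n])
    hence "(\<Sum>i<n. (D * R1 * D) $$ (i,i)) + (\<Sum>i<n. (D * R2 * D) $$ (i,i))
        = (\<Sum>i<n. (D * (R1 * D + D * R2)) $$ (i,i))"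
    proof -
      have M: "D * (R1 * D + D * R2) = D * R1 * D + D * (D * R2)"
        using Dc R1c R2c mult_add_distrib_mat[OF Dc mult_carrier_mat[OF R1c Dc] mult_carrier_mat[OF Dc R2c]] by (simp add: assoc_mult_mat[of D n n R1 n D n])
      have "(\<Sum>i<n. (D * (R1 * D + D * R2)) $$ (i,i)) = (\<Sum>i<n. (D * R1 * D) $$ (i,i) + (D * (D * R2)) $$ (i,i))"
        unfolding M using Dc R1c R2c by (intro sum.cong refl, simp)
      thus ?thesis using \<open>(\<Sum>i<n. (D * R2 * D) $$ (i,i)) = _\<close> by (simp add: sum.distrib)
    qed
    also have "\<dots> = 0" unfolding key using Dc by simp
    finally show ?thesis .
  qed
  have nonneg: "Re (qform R x) \<ge> 0" if "hermitian_pd n R" "x \<in> carrier_vec n" for R x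
  proof (cases "x = 0\<^sub>v n")
    case True thus ?thesis using that by (auto simp add: qform_def hermitian_pd_def scalar_prod_def)
  next
    case False thus ?thesis using that unfolding hermitian_pd_def by (meson less_imp_le)
  qed
  have sum0: "(\<Sum>i<n. Re (qform R1 (col D i)) + Re (qform R2 (col D i))) = 0"
  proof -
    have "(\<Sum>i<n. Re (qform R1 (col D i)) + Re (qform R2 (col D i)))
       = Re ((\<Sum>i<n. (D * R1 * D) $$ (i,i)) + (\<Sum>i<n. (D * R2 * D) $$ (i,i)))"
      using diag_DHD[OF Dc Dh R1c] diag_DHD[OF Dc Dh R2c] by (simp add: sum.distrib Re_sum)
    thus ?thesis unfolding S0 by simp
  qed
  have cols: "\<forall>i\<in>{..<n}. Re (qform R1 (col D i)) + Re (qform R2 (col D i)) = 0"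
    using iffD1[OF sum_nonneg_eq_0_iff sum0] nonneg[OF R1] nonneg[OF R2] Dc by (auto intro!: add_nonneg_nonneg)
  have colD: "col D i = 0\<^sub>v n" if i: "i < n" for i
  proof (rule ccontr)
    assume "col D i \<noteq> 0\<^sub>v n"
    hence "Re (qform R1 (col D i)) > 0" "Re (qform R2 (col D i)) \<ge> 0"
      using R1 nonneg[OF R2, of "col D i"] Dc unfolding hermitian_pd_def by auto
    thus False using cols i by force
  qed
  have "D $$ (j,i) = 0" if "i < n" "j < n" for i j
    using that Dc arg_cong[OF colD[OF that(1)], of "\<lambda>v. v $ j"] by simp
  hence "R1 $$ (i,j) = R2 $$ (i,j)" if "i < n" "j < n" for i j
    using that R1c R2c unfolding D_def by force
  thus ?thesis using R1c R2c by (intro eq_matI, auto)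
qed

lemma mult_mat_vec_zero[simp]: "A \<in> carrier_mat m n \<Longrightarrow> A *\<^sub>v 0\<^sub>v n = 0\<^sub>v m"
  by (intro eq_vecI, auto simp: scalar_prod_def)

lemma mult_sq_carrier: "A \<in> carrier_mat n n \<Longrightarrow> B \<in> carrier_mat n n \<Longrightarrow> A * B \<in> carrier_mat n n"
  by auto

lemma qform_unit: assumes T: "T \<in> carrier_mat n n" and i: "i < n"
  shows "qform T (unit_vec n i) = T $$ (i,i)"
proof -
  have "qform T (unit_vec n i) = (\<Sum>k<n. (T *\<^sub>v unit_vec n i) $ k * cnj (unit_vec n i $ k))"
    unfolding qform_def using T by (simp add: scalar_prod_def lessThan_atLeast0)
  also have "\<dots> = (\<Sum>k<n. if k = i then (T *\<^sub>v unit_vec n i) $ k else 0)"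
    using i by (intro sum.cong refl, auto simp: unit_vec_def)
  also have "\<dots> = (T *\<^sub>v unit_vec n i) $ i" using i by simp
  also have "\<dots> = T $$ (i,i)" using T i by simp
  finally show ?thesis .
qed

lemma hpd_sqrt_exists: assumes S: "hermitian_pd n S"
  shows "\<exists>R. hermitian_pd n R \<and> R * R = S"
proof -
  have Sc: "S \<in> carrier_mat n n" and Sh: "adj S = S" using S unfolding hermitian_pd_def hermitian_mat_def by auto
  from unitary_schur[OF Sc] obtain P T where sim: "similar_mat_wit S T P (adj P)" and ut: "upper_triangular T" by auto
  note w = similar_mat_witD2[OF Sc sim]
  have PP: "P * adj P = 1\<^sub>m n" "adj P * P = 1\<^sub>m n"
    and SPT: "S = P * T * adj P" and Tc: "T \<in> carrier_mat n n" and Pc: "P \<in> carrier_mat n n"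
    using w by blast+
  have aPc: "adj P \<in> carrier_mat n n" using Pc by simp
  note assoc = assoc_mult_mat[of _ n n _ n _ n]
  have TPS: "T = adj P * S * P"
  proof -
    have "adj P * S * P = (adj P * P) * T * (adj P * P)" unfolding SPT using Pc Tc aPc by (simp add: assoc aPc mult_sq_carrier)
    thus ?thesis unfolding PP using Tc by simp
  qed
  have Th: "adj T = T"
  proof -
    have "adj T = adj P * adj S * adj (adj P)" unfolding TPS
      using adj_mult[OF mult_carrier_mat[OF aPc Sc] Pc] adj_mult[OF aPc Sc] Pc Sc by (simp add: assoc aPc mult_sq_carrier)
    thus ?thesis unfolding Sh adj_adj TPS[symmetric] .
  qed
  have Tij: "T $$ (i,j) = cnj (T $$ (j,i))" if "i < n" "j < n" for i j
    using arg_cong[OF Th, of "\<lambda>M. M $$ (i,j)"] that Tc by auto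
  have Toff: "T $$ (i,j) = 0" if "i < n" "j < n" "i \<noteq> j" for i j
  proof (cases "j < i")
    case True thus ?thesis using ut that Tc unfolding upper_triangular_def by auto
  next
    case False
    hence "T $$ (j,i) = 0" using ut that Tc unfolding upper_triangular_def by auto
    thus ?thesis using Tij[OF that(1,2)] by simp
  qed
  have Tpos: "Re (T $$ (i,i)) > 0" "T $$ (i,i) = complex_of_real (Re (T $$ (i,i)))" if i: "i < n" for i
  proof -
    have "T $$ (i,i) = cnj (T $$ (i,i))" using Tij[OF i i] .
    thus "T $$ (i,i) = complex_of_real (Re (T $$ (i,i)))" by (metis Reals_cnj_iff complex_is_Real_iff of_real_Re)
    have e: "unit_vec n i \<in> carrier_vec n" by simp
    have ne: "P *\<^sub>v unit_vec n i \<noteq> 0\<^sub>v n"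
    proof
      assume "P *\<^sub>v unit_vec n i = 0\<^sub>v n"
      hence "adj P *\<^sub>v (P *\<^sub>v unit_vec n i) = 0\<^sub>v n" using aPc by simp
      moreover have "adj P *\<^sub>v (P *\<^sub>v unit_vec n i) = unit_vec n i"
        using assoc_mult_mat_vec[OF aPc Pc e, symmetric] PP(2) e by simp
      ultimately have "(unit_vec n i :: complex vec) $ i = 0\<^sub>v n $ i" by simp
      thus False using i by simp
    qed
    have "qform T (unit_vec n i) = qform S (P *\<^sub>v unit_vec n i)"
      unfolding TPS using qform_conj[OF Pc Sc e] by simp
    thus "Re (T $$ (i,i)) > 0" unfolding qform_unit[OF Tc i] using S ne Pc unfolding hermitian_pd_def by auto
  qed
  define d where "d i = complex_of_real (sqrt (Re (T $$ (i,i))))" for i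
  define D where "D = mat n n (\<lambda>(i,j). if i = j then d i else 0)"
  have Dc: "D \<in> carrier_mat n n" unfolding D_def by simp
  have DD: "D * D = T"
  proof (rule eq_matI)
    fix i j assume i: "i < dim_row T" and j: "j < dim_col T"
    hence i: "i < n" and j: "j < n" using Tc by auto
    have "(D * D) $$ (i,j) = (\<Sum>k<n. (if i = k then d i else 0) * (if k = j then d k else 0))"
      using i j unfolding D_def by (simp add: scalar_prod_def lessThan_atLeast0)
    also have "\<dots> = (\<Sum>k<n. if k = i then (if i = j then d i * d i else 0) else 0)"
      by (intro sum.cong refl, auto)
    also have "\<dots> = (if i = j then d i * d i else 0)" using i by simp
    also have "\<dots> = T $$ (i,j)"
    proof (cases "i = j")
      case True
      have "d i * d i = complex_of_real (Re (T $$ (i,i)))" unfolding d_def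
        using Tpos(1)[OF i] by (simp flip: of_real_mult)
      thus ?thesis using True Tpos(2)[OF i] by simp
    qed (use Toff i j in auto)
    finally show "(D * D) $$ (i,j) = T $$ (i,j)" .
  qed (use Dc Tc in auto)
  have Dh: "adj D = D" unfolding D_def d_def by (intro eq_matI, auto)
  define R where "R = P * D * adj P"
  have Rc: "R \<in> carrier_mat n n" unfolding R_def using Pc Dc by auto
  have Rh: "adj R = R"
  proof -
    have "adj R = adj (adj P) * adj (P * D)" unfolding R_def
      using adj_mult[OF mult_carrier_mat[OF Pc Dc] aPc] .
    also have "\<dots> = P * (D * adj P)" using adj_mult[OF Pc Dc] Dh by simp
    finally show ?thesis unfolding R_def using Pc Dc by (simp add: assoc aPc mult_sq_carrier)
  qed
  have RR: "R * R = S"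
  proof -
    have "R * R = P * D * (adj P * P) * D * adj P" unfolding R_def using Pc Dc by (simp add: assoc aPc mult_sq_carrier)
    also have "\<dots> = P * (D * D) * adj P" unfolding PP using Pc Dc by (simp add: assoc aPc mult_sq_carrier)
    finally show ?thesis unfolding DD SPT .
  qed
  have qD: "qform D y = complex_of_real (\<Sum>i<n. sqrt (Re (T $$ (i,i))) * (cmod (y $ i))^2)"
    if y: "y \<in> carrier_vec n" for y
  proof -
    have "qform D y = (\<Sum>i<n. d i * (y $ i * cnj (y $ i)))"
    proof -
      have "(D *\<^sub>v y) $ i = d i * y $ i" if "i < n" for i
      proof -
        have "(D *\<^sub>v y) $ i = (\<Sum>k<n. (if i = k then d i else 0) * y $ k)"
          using that y unfolding D_def by (simp add: scalar_prod_def lessThan_atLeast0)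
        also have "\<dots> = (\<Sum>k<n. if k = i then d i * y $ i else 0)" by (intro sum.cong refl, auto)
        finally show ?thesis using that by simp
      qed
      thus ?thesis unfolding qform_def using y Dc by (auto simp: scalar_prod_def lessThan_atLeast0 intro!: sum.cong)
    qed
    also have "\<dots> = (\<Sum>i<n. complex_of_real (sqrt (Re (T $$ (i,i))) * (cmod (y $ i))^2))"
      unfolding d_def by (intro sum.cong refl, subst complex_norm_square[symmetric], simp)
    finally show ?thesis by simp
  qed
  have Rpd: "Re (qform R x) > 0" if x: "x \<in> carrier_vec n" "x \<noteq> 0\<^sub>v n" for x
  proof -
    define y where "y = adj P *\<^sub>v x"
    have y: "y \<in> carrier_vec n" unfolding y_def using x aPc by simp
    have "P *\<^sub>v y = x" unfolding y_def using assoc_mult_mat_vec[OF Pc aPc x(1), symmetric] PP(1) x by simp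
    hence "y \<noteq> 0\<^sub>v n" using x Pc by auto
    then obtain i where i: "i < n" "y $ i \<noteq> 0" using y by (auto simp: vec_eq_iff)
    have "qform R x = qform D y" unfolding R_def y_def
      using qform_conj[OF aPc Dc x(1)] by simp
    also have "Re \<dots> = (\<Sum>i<n. sqrt (Re (T $$ (i,i))) * (cmod (y $ i))^2)" unfolding qD[OF y] by simp
    also have "\<dots> > 0"
    proof (rule sum_pos2[of _ i])
      show "0 < sqrt (Re (T $$ (i,i))) * (cmod (y $ i))^2" using i Tpos(1)[OF i(1)] by simp
      show "\<And>j. j \<in> {..<n} \<Longrightarrow> 0 \<le> sqrt (Re (T $$ (j,j))) * (cmod (y $ j))^2"
        using Tpos(1) by (simp add: less_imp_le)
    qed (use i in auto)
    finally show ?thesis .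
  qed
  have "hermitian_pd n R" unfolding hermitian_pd_def hermitian_mat_def using Rc Rh Rpd by auto
  thus ?thesis using RR by auto
qed

lemma msqrt_props: assumes S: "hermitian_pd n S"
  shows "hermitian_pd n (msqrt n S)" "msqrt n S * msqrt n S = S"
proof -
  have "\<exists>!R. hermitian_pd n R \<and> R * R = S"
    using hpd_sqrt_exists[OF S] hpd_sqrt_unique by metis
  from theI'[OF this] show "hermitian_pd n (msqrt n S)" "msqrt n S * msqrt n S = S"
    unfolding msqrt_def by auto
qed

definition psdq :: "nat \<Rightarrow> complex mat \<Rightarrow> bool" where
  "psdq n X \<longleftrightarrow> X \<in> carrier_mat n n \<and> (\<forall>x\<in>carrier_vec n. Re (qform X x) \<ge> 0)"

lemma qform_adj: assumes "P \<in> carrier_mat n n" "y \<in> carrier_vec n"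
  shows "qform (adj P) y = cnj (qform P y)"
  using assms unfolding qform_def by (simp add: adj_inner[of P n n] cscalar_cnj[of _ n])

lemma psdq_tilde: assumes P: "pos_semidef n P" and Ri: "Ri \<in> carrier_mat n n" and Rh: "adj Ri = Ri"
  shows "psdq n (Ri * P * Ri)"
proof -
  have Pc: "P \<in> carrier_mat n n" using P unfolding pos_semidef_def by auto
  have h: "Re (qform (P + adj P) y) \<ge> 0" if "y \<in> carrier_vec n" for y
    using P that unfolding pos_semidef_def hermitian_psd_def by auto
  show ?thesis unfolding psdq_def
  proof (intro conjI ballI)
    show "Ri * P * Ri \<in> carrier_mat n n" using Ri Pc by auto
    fix x :: "complex vec" assume x: "x \<in> carrier_vec n"
    have y: "Ri *\<^sub>v x \<in> carrier_vec n" using Ri x by auto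
    have "qform (Ri * P * Ri) x = qform P (Ri *\<^sub>v x)"
      using qform_conj[OF Ri Pc x] Rh by simp
    moreover have "Re (qform (P + adj P) (Ri *\<^sub>v x)) = 2 * Re (qform P (Ri *\<^sub>v x))"
      using qform_add[OF Pc adj_carrier[OF Pc] y] qform_adj[OF Pc y] by simp
    ultimately show "Re (qform (Ri * P * Ri) x) \<ge> 0" using h[OF y] by simp
  qed
qed

lemma vec_pm_identity: assumes w: "w \<in> carrier_vec n" and u: "u \<in> carrier_vec n"
  shows "Re ((w + u) \<bullet>c (w + u)) = Re ((w - u) \<bullet>c (w - u)) + 4 * Re (u \<bullet>c w)"
proof -
  have "Re ((w + u) \<bullet>c (w + u)) = (\<Sum>i<n. Re ((w$i + u$i) * cnj (w$i + u$i)))"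
    using w u by (simp add: scalar_prod_def lessThan_atLeast0 Re_sum)
  also have "\<dots> = (\<Sum>i<n. Re ((w$i - u$i) * cnj (w$i - u$i)) + 4 * Re (u$i * cnj (w$i)))"
    by (intro sum.cong refl, simp add: algebra_simps)
  also have "\<dots> = Re ((w - u) \<bullet>c (w - u)) + 4 * Re (u \<bullet>c w)"
    using w u by (simp add: scalar_prod_def lessThan_atLeast0 Re_sum sum.distrib sum_distrib_left)
  finally show ?thesis .
qed

lemma psdq_contract: assumes X: "psdq n X" and w: "w \<in> carrier_vec n"
  shows "Re (((1\<^sub>m n - X) *\<^sub>v w) \<bullet>c ((1\<^sub>m n - X) *\<^sub>v w)) \<le> Re (((1\<^sub>m n + X) *\<^sub>v w) \<bullet>c ((1\<^sub>m n + X) *\<^sub>v w))"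
proof -
  have Xc: "X \<in> carrier_mat n n" and q: "Re (qform X w) \<ge> 0" using X w unfolding psdq_def by auto
  have e1: "(1\<^sub>m n + X) *\<^sub>v w = w + X *\<^sub>v w" using add_mult_distrib_mat_vec[OF one_carrier_mat Xc w] w by simp
  have e2: "(1\<^sub>m n - X) *\<^sub>v w = w - X *\<^sub>v w" using minus_mult_distrib_mat_vec[OF one_carrier_mat Xc w] w by simp
  show ?thesis unfolding e1 e2 using vec_pm_identity[OF w, of "X *\<^sub>v w"] Xc w q
    unfolding qform_def by simp
qed

lemma psdq_inj: assumes X: "psdq n X" and w: "w \<in> carrier_vec n" and z: "(1\<^sub>m n + X) *\<^sub>v w = 0\<^sub>v n"
  shows "w = 0\<^sub>v n"
proof -
  have Xc: "X \<in> carrier_mat n n" and q: "Re (qform X w) \<ge> 0" using X w unfolding psdq_def by auto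
  have "(1\<^sub>m n + X) *\<^sub>v w = w + X *\<^sub>v w" using add_mult_distrib_mat_vec[OF one_carrier_mat Xc w] w by simp
  have "0 = Re (((1\<^sub>m n + X) *\<^sub>v w) \<bullet>c w)" unfolding z using w by (simp add: scalar_prod_def)
  also have "\<dots> = Re (w \<bullet>c w) + Re (qform X w)"
    unfolding \<open>(1\<^sub>m n + X) *\<^sub>v w = w + X *\<^sub>v w\<close> qform_def using Xc w
    by (simp add: add_scalar_prod_distrib[of _ n])
  finally have "Re (w \<bullet>c w) = 0" using q cscalar_self_ge0[OF w] by linarith
  thus ?thesis using cscalar_self_eq0[OF w] by simp
qed

lemma cinner_sum: assumes "u \<in> carrier_vec n" "v \<in> carrier_vec n"
  shows "u \<bullet>c v = (\<Sum>i<n. u$i * cnj (v$i))"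
  using assms by (simp add: scalar_prod_def lessThan_atLeast0)

lemma term_expand: fixes x a b :: complex
  shows "(x+a+b)*cnj(x+a+b) = (x*cnj x + a*cnj a + b*cnj x + x*cnj b + b*cnj b) + (a*cnj x + x*cnj a + b*cnj a + a*cnj b)"
    "(x-a+b)*cnj(x-a+b) = (x*cnj x + a*cnj a + b*cnj x + x*cnj b + b*cnj b) - (a*cnj x + x*cnj a + b*cnj a + a*cnj b)"
  by (simp_all add: algebra_simps)

lemma vec_expand: fixes x a b :: "complex vec" assumes x: "x \<in> carrier_vec n" and a: "a \<in> carrier_vec n" and b: "b \<in> carrier_vec n"
  shows "(x + a + b) \<bullet>c (x + a + b) = (x \<bullet>c x + a \<bullet>c a + b \<bullet>c x + x \<bullet>c b + b \<bullet>c b)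
            + (a \<bullet>c x + x \<bullet>c a + b \<bullet>c a + a \<bullet>c b)"
   "(x - a + b) \<bullet>c (x - a + b) = (x \<bullet>c x + a \<bullet>c a + b \<bullet>c x + x \<bullet>c b + b \<bullet>c b)
            - (a \<bullet>c x + x \<bullet>c a + b \<bullet>c a + a \<bullet>c b)"
proof -
  have c1: "x + a + b \<in> carrier_vec n" "x - a + b \<in> carrier_vec n" using x a b by auto
  have i1: "(x + a + b) $ i = x$i + a$i + b$i" "(x - a + b) $ i = x$i - a$i + b$i" if "i < n" for i
    using that x a b by auto
  have s1: "(\<Sum>i<n. (x + a + b) $ i * cnj ((x + a + b) $ i)) = (\<Sum>i<n. (x$i*cnj (x$i) + a$i*cnj (a$i) + b$i*cnj (x$i) + x$i*cnj (b$i) + b$i*cnj (b$i)) + (a$i*cnj (x$i) + x$i*cnj (a$i) + b$i*cnj (a$i) + a$i*cnj (b$i)))"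
    by (intro sum.cong refl, simp only: i1 lessThan_iff term_expand)
  have s2: "(\<Sum>i<n. (x - a + b) $ i * cnj ((x - a + b) $ i)) = (\<Sum>i<n. (x$i*cnj (x$i) + a$i*cnj (a$i) + b$i*cnj (x$i) + x$i*cnj (b$i) + b$i*cnj (b$i)) - (a$i*cnj (x$i) + x$i*cnj (a$i) + b$i*cnj (a$i) + a$i*cnj (b$i)))"
    by (intro sum.cong refl, simp only: i1 lessThan_iff term_expand)
  show "(x + a + b) \<bullet>c (x + a + b) = (x \<bullet>c x + a \<bullet>c a + b \<bullet>c x + x \<bullet>c b + b \<bullet>c b)
            + (a \<bullet>c x + x \<bullet>c a + b \<bullet>c a + a \<bullet>c b)"
    unfolding cinner_sum[OF c1(1) c1(1)] cinner_sum[OF x x] cinner_sum[OF a a] cinner_sum[OF b b]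
      cinner_sum[OF x a] cinner_sum[OF a x] cinner_sum[OF x b] cinner_sum[OF b x]
      cinner_sum[OF a b] cinner_sum[OF b a] s1
    by (simp only: sum.distrib)
  show "(x - a + b) \<bullet>c (x - a + b) = (x \<bullet>c x + a \<bullet>c a + b \<bullet>c x + x \<bullet>c b + b \<bullet>c b)
            - (a \<bullet>c x + x \<bullet>c a + b \<bullet>c a + a \<bullet>c b)"
    unfolding cinner_sum[OF c1(2) c1(2)] cinner_sum[OF x x] cinner_sum[OF a a] cinner_sum[OF b b]
      cinner_sum[OF x a] cinner_sum[OF a x] cinner_sum[OF x b] cinner_sum[OF b x]
      cinner_sum[OF a b] cinner_sum[OF b a] s2
    by (simp only: sum.distrib sum_subtractf)
qed

lemma mmv: "A \<in> carrier_mat n n \<Longrightarrow> B \<in> carrier_mat n n \<Longrightarrow> v \<in> carrier_vec n \<Longrightarrow> (A * B) *\<^sub>v v = A *\<^sub>v (B *\<^sub>v v)"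
  by simp

lemma qform_add4: assumes "A \<in> carrier_mat n n" "B \<in> carrier_mat n n" "C \<in> carrier_mat n n" "D \<in> carrier_mat n n" "x \<in> carrier_vec n"
  shows "qform (A + B + C + D) x = qform A x + qform B x + qform C x + qform D x"
  using assms by (simp add: qform_add[of _ n])

lemma qform_add5: assumes "A \<in> carrier_mat n n" "B \<in> carrier_mat n n" "C \<in> carrier_mat n n" "D \<in> carrier_mat n n" "E \<in> carrier_mat n n" "x \<in> carrier_vec n"
  shows "qform (A + B + C + D + E) x = qform A x + qform B x + qform C x + qform D x + qform E x"
  using assms by (simp add: qform_add[of _ n])

lemma r_sum: fixes X1 X2 :: "complex mat"
  assumes X1: "X1 \<in> carrier_mat n n" and X2: "X2 \<in> carrier_mat n n" and x: "x \<in> carrier_vec n"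
  defines "At \<equiv> X1 + X2"
  defines "H1 \<equiv> 1\<^sub>m n + adj At * At + X2 * X1 + adj X1 * adj X2 + adj X1 * adj X2 * X2 * X1"
  defines "H2 \<equiv> At + adj At + adj At * X2 * X1 + adj X1 * adj X2 * At"
  shows "qform H1 x + qform H2 x = (((1\<^sub>m n + X2) * (1\<^sub>m n + X1)) *\<^sub>v x) \<bullet>c (((1\<^sub>m n + X2) * (1\<^sub>m n + X1)) *\<^sub>v x)"
    "qform H1 x - qform H2 x = (((1\<^sub>m n - X2) * (1\<^sub>m n - X1)) *\<^sub>v x) \<bullet>c (((1\<^sub>m n - X2) * (1\<^sub>m n - X1)) *\<^sub>v x)"
proof -
  have Atc: "At \<in> carrier_mat n n" unfolding At_def using X1 X2 by auto
  have a1: "adj X1 \<in> carrier_mat n n" "adj X2 \<in> carrier_mat n n" "adj At \<in> carrier_mat n n"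
    using X1 X2 Atc by auto
  note c = X1 X2 Atc a1 x mult_sq_carrier
  define a where "a = At *\<^sub>v x"
  define b where "b = X2 *\<^sub>v (X1 *\<^sub>v x)"
  have a: "a \<in> carrier_vec n" and b: "b \<in> carrier_vec n" unfolding a_def b_def using c by auto
  have ia: "At *\<^sub>v x = X1 *\<^sub>v x + X2 *\<^sub>v x" unfolding At_def using add_mult_distrib_mat_vec[OF X1 X2 x] .
  have p: "((1\<^sub>m n + X2) * (1\<^sub>m n + X1)) *\<^sub>v x = x + a + b"
  proof -
    have "((1\<^sub>m n + X2) * (1\<^sub>m n + X1)) *\<^sub>v x = (1\<^sub>m n + X2) *\<^sub>v ((1\<^sub>m n + X1) *\<^sub>v x)"
      using c by (intro mmv, auto)
    also have "(1\<^sub>m n + X1) *\<^sub>v x = x + X1 *\<^sub>v x" using add_mult_distrib_mat_vec[OF one_carrier_mat X1 x] x by simp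
    also have "(1\<^sub>m n + X2) *\<^sub>v (x + X1 *\<^sub>v x) = (x + X1 *\<^sub>v x) + X2 *\<^sub>v (x + X1 *\<^sub>v x)"
      using add_mult_distrib_mat_vec[OF one_carrier_mat X2, of "x + X1 *\<^sub>v x"] c by simp
    also have "X2 *\<^sub>v (x + X1 *\<^sub>v x) = X2 *\<^sub>v x + b" unfolding b_def
      using mult_add_distrib_mat_vec[OF X2 x, of "X1 *\<^sub>v x"] c by simp
    finally show ?thesis unfolding a_def ia using c b by (auto simp: add.assoc)
  qed
  have m: "((1\<^sub>m n - X2) * (1\<^sub>m n - X1)) *\<^sub>v x = x - a + b"
  proof -
    have "((1\<^sub>m n - X2) * (1\<^sub>m n - X1)) *\<^sub>v x = (1\<^sub>m n - X2) *\<^sub>v ((1\<^sub>m n - X1) *\<^sub>v x)"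
      using c by (intro mmv, auto)
    also have "(1\<^sub>m n - X1) *\<^sub>v x = x - X1 *\<^sub>v x" using minus_mult_distrib_mat_vec[OF one_carrier_mat X1 x] x by simp
    also have "(1\<^sub>m n - X2) *\<^sub>v (x - X1 *\<^sub>v x) = (x - X1 *\<^sub>v x) - X2 *\<^sub>v (x - X1 *\<^sub>v x)"
      using minus_mult_distrib_mat_vec[OF one_carrier_mat X2, of "x - X1 *\<^sub>v x"] c by simp
    also have "X2 *\<^sub>v (x - X1 *\<^sub>v x) = X2 *\<^sub>v x - b" unfolding b_def
      using mult_minus_distrib_mat_vec[OF X2 x, of "X1 *\<^sub>v x"] c by simp
    finally show ?thesis unfolding a_def ia using c b by (auto simp: vec_eq_iff)
  qed
  have q1: "qform (1\<^sub>m n) x = x \<bullet>c x" unfolding qform_def using x by simp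
  have q2: "qform (adj At * At) x = a \<bullet>c a" unfolding qform_def a_def mmv[OF a1(3) Atc x]
    using adj_inner[OF Atc, of "At *\<^sub>v x" x] c by simp
  have q3: "qform (X2 * X1) x = b \<bullet>c x" unfolding qform_def b_def mmv[OF X2 X1 x] ..
  have q4: "qform (adj X1 * adj X2) x = x \<bullet>c b" unfolding qform_def b_def mmv[OF a1(1) a1(2) x]
    using adj_inner[OF X1, of "adj X2 *\<^sub>v x" x] adj_inner[OF X2, of x "X1 *\<^sub>v x"] c by simp
  have q5: "qform (adj X1 * adj X2 * X2 * X1) x = b \<bullet>c b" unfolding qform_def b_def
    mmv[OF mult_sq_carrier[OF mult_sq_carrier[OF a1(1) a1(2)] X2] X1 x]
    mmv[OF mult_sq_carrier[OF a1(1) a1(2)] X2 mult_mat_vec_carrier[OF X1 x]]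
    mmv[OF a1(1) a1(2) mult_mat_vec_carrier[OF X2 mult_mat_vec_carrier[OF X1 x]]]
    using adj_inner[OF X1, of "adj X2 *\<^sub>v (X2 *\<^sub>v (X1 *\<^sub>v x))" x] adj_inner[OF X2, of "X2 *\<^sub>v (X1 *\<^sub>v x)" "X1 *\<^sub>v x"] c by simp
  have q6: "qform At x = a \<bullet>c x" unfolding qform_def a_def ..
  have q7: "qform (adj At) x = x \<bullet>c a" unfolding qform_def a_def using adj_inner[OF Atc x x] .
  have q8: "qform (adj At * X2 * X1) x = b \<bullet>c a" unfolding qform_def a_def b_def
    mmv[OF mult_sq_carrier[OF a1(3) X2] X1 x] mmv[OF a1(3) X2 mult_mat_vec_carrier[OF X1 x]]
    using adj_inner[OF Atc, of "X2 *\<^sub>v (X1 *\<^sub>v x)" x] c by simp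
  have q9: "qform (adj X1 * adj X2 * At) x = a \<bullet>c b" unfolding qform_def a_def b_def
    mmv[OF mult_sq_carrier[OF a1(1) a1(2)] Atc x] mmv[OF a1(1) a1(2) mult_mat_vec_carrier[OF Atc x]]
    using adj_inner[OF X1, of "adj X2 *\<^sub>v (At *\<^sub>v x)" x] adj_inner[OF X2, of "At *\<^sub>v x" "X1 *\<^sub>v x"] c by simp
  have qH1: "qform H1 x = x \<bullet>c x + a \<bullet>c a + b \<bullet>c x + x \<bullet>c b + b \<bullet>c b"
    unfolding H1_def q1[symmetric] q2[symmetric] q3[symmetric] q4[symmetric] q5[symmetric]
    by (rule qform_add5, insert c, auto)
  have qH2: "qform H2 x = a \<bullet>c x + x \<bullet>c a + b \<bullet>c a + a \<bullet>c b"
    unfolding H2_def q6[symmetric] q7[symmetric] q8[symmetric] q9[symmetric]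
    by (rule qform_add4, insert c, auto)
  show "qform H1 x + qform H2 x = (((1\<^sub>m n + X2) * (1\<^sub>m n + X1)) *\<^sub>v x) \<bullet>c (((1\<^sub>m n + X2) * (1\<^sub>m n + X1)) *\<^sub>v x)"
    unfolding p qH1 qH2 vec_expand(1)[OF x a b] ..
  show "qform H1 x - qform H2 x = (((1\<^sub>m n - X2) * (1\<^sub>m n - X1)) *\<^sub>v x) \<bullet>c (((1\<^sub>m n - X2) * (1\<^sub>m n - X1)) *\<^sub>v x)"
    unfolding m qH1 qH2 vec_expand(2)[OF x a b] ..
qed

lemma cinner_smult: fixes p :: "complex vec" assumes p: "p \<in> carrier_vec n"
  shows "Re ((k \<cdot>\<^sub>v p) \<bullet>c (k \<cdot>\<^sub>v p)) = (cmod k)^2 * Re (p \<bullet>c p)"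
proof -
  have "(k \<cdot>\<^sub>v p) \<bullet>c (k \<cdot>\<^sub>v p) = (k * cnj k) * (p \<bullet>c p)"
    using p by (simp add: scalar_prod_smult_distrib smult_scalar_prod_distrib conjugate_smult_vec)
  also have "k * cnj k = complex_of_real ((cmod k)^2)" using complex_norm_square[of k] by simp
  finally show ?thesis by simp
qed

lemma cinner_pos: fixes p :: "complex vec" assumes "p \<in> carrier_vec n" "p \<noteq> 0\<^sub>v n"
  shows "Re (p \<bullet>c p) > 0"
  using cscalar_self_ge0[OF assms(1)] cscalar_self_eq0[OF assms(1)] assms(2) by force

lemma eig_analysis: fixes X1 X2 E1 E2 :: "complex mat"
  assumes X1: "psdq n X1" and X2: "psdq n X2"
  and E1c: "E1 \<in> carrier_mat n n" and E2c: "E2 \<in> carrier_mat n n"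
  and CE1: "(1\<^sub>m n + X1) * E1 = 1\<^sub>m n" and EC1: "E1 * (1\<^sub>m n + X1) = 1\<^sub>m n"
  and CE2: "(1\<^sub>m n + X2) * E2 = 1\<^sub>m n" and EC2: "E2 * (1\<^sub>m n + X2) = 1\<^sub>m n"
  and x: "x \<in> carrier_vec n" and x0: "x \<noteq> 0\<^sub>v n"
  and ev: "(E1 * E2 * ((1\<^sub>m n - X2) * (1\<^sub>m n - X1))) *\<^sub>v x = k \<cdot>\<^sub>v x"
  shows "Re ((((1\<^sub>m n + X2) * (1\<^sub>m n + X1)) *\<^sub>v x) \<bullet>c (((1\<^sub>m n + X2) * (1\<^sub>m n + X1)) *\<^sub>v x)) > 0"
    "Re ((((1\<^sub>m n - X2) * (1\<^sub>m n - X1)) *\<^sub>v x) \<bullet>c (((1\<^sub>m n - X2) * (1\<^sub>m n - X1)) *\<^sub>v x))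
      = (cmod k)^2 * Re ((((1\<^sub>m n + X2) * (1\<^sub>m n + X1)) *\<^sub>v x) \<bullet>c (((1\<^sub>m n + X2) * (1\<^sub>m n + X1)) *\<^sub>v x))"
    "cmod k \<le> 1"
proof -
  have X1c: "X1 \<in> carrier_mat n n" and X2c: "X2 \<in> carrier_mat n n" using X1 X2 unfolding psdq_def by auto
  define C1 where "C1 = 1\<^sub>m n + X1"
  define C2 where "C2 = 1\<^sub>m n + X2"
  define D1 where "D1 = 1\<^sub>m n - X1"
  define D2 where "D2 = 1\<^sub>m n - X2"
  have cc: "C1 \<in> carrier_mat n n" "C2 \<in> carrier_mat n n" "D1 \<in> carrier_mat n n" "D2 \<in> carrier_mat n n"
    unfolding C1_def C2_def D1_def D2_def using X1c X2c by auto
  note assoc = assoc_mult_mat[of _ n n _ n _ n]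
  note cs = cc E1c E2c X1c X2c mult_sq_carrier
  define a where "a = C1 *\<^sub>v x"
  define b where "b = D1 *\<^sub>v x"
  define p where "p = (C2 * C1) *\<^sub>v x"
  define m where "m = (D2 * D1) *\<^sub>v x"
  have ac: "a \<in> carrier_vec n" "b \<in> carrier_vec n" "p \<in> carrier_vec n" "m \<in> carrier_vec n"
    unfolding a_def b_def p_def m_def using cs x by auto
  have pa: "p = C2 *\<^sub>v a" unfolding p_def a_def using cc x by simp
  have mb: "m = D2 *\<^sub>v b" unfolding m_def b_def using cc x by simp
  have a0: "a \<noteq> 0\<^sub>v n" using psdq_inj[OF X1 x] x0 unfolding a_def C1_def by auto
  have p0: "p \<noteq> 0\<^sub>v n" using psdq_inj[OF X2 ac(1)] a0 unfolding pa C2_def by auto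
  have mk: "m = k \<cdot>\<^sub>v p"
  proof -
    have "C2 * C1 * (E1 * E2 * (D2 * D1)) = D2 * D1"
    proof -
      have "C2 * C1 * (E1 * E2 * (D2 * D1)) = C2 * ((C1 * E1) * (E2 * (D2 * D1)))" using cs by (simp add: assoc)
      also have "\<dots> = (C2 * E2) * (D2 * D1)" unfolding C1_def CE1 using cs by (simp add: assoc)
      also have "\<dots> = D2 * D1" unfolding C2_def CE2 using cs by simp
      finally show ?thesis .
    qed
    hence "m = (C2 * C1 * (E1 * E2 * (D2 * D1))) *\<^sub>v x" unfolding m_def by simp
    also have "\<dots> = (C2 * C1) *\<^sub>v ((E1 * E2 * (D2 * D1)) *\<^sub>v x)"
      by (rule assoc_mult_mat_vec[of _ n n], use cs x in auto)
    also have "(E1 * E2 * (D2 * D1)) *\<^sub>v x = k \<cdot>\<^sub>v x" using ev unfolding D1_def D2_def .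
    also have "(C2 * C1) *\<^sub>v (k \<cdot>\<^sub>v x) = k \<cdot>\<^sub>v p" unfolding p_def using mult_mat_vec[OF mult_sq_carrier[OF cc(2) cc(1)] x] by simp
    finally show ?thesis .
  qed
  show pos: "Re ((((1\<^sub>m n + X2) * (1\<^sub>m n + X1)) *\<^sub>v x) \<bullet>c (((1\<^sub>m n + X2) * (1\<^sub>m n + X1)) *\<^sub>v x)) > 0"
    using cinner_pos[OF ac(3) p0] unfolding p_def C1_def C2_def .
  show "Re ((((1\<^sub>m n - X2) * (1\<^sub>m n - X1)) *\<^sub>v x) \<bullet>c (((1\<^sub>m n - X2) * (1\<^sub>m n - X1)) *\<^sub>v x))
      = (cmod k)^2 * Re ((((1\<^sub>m n + X2) * (1\<^sub>m n + X1)) *\<^sub>v x) \<bullet>c (((1\<^sub>m n + X2) * (1\<^sub>m n + X1)) *\<^sub>v x))"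
    using cinner_smult[OF ac(3), of k] mk unfolding m_def p_def C1_def C2_def D1_def D2_def by simp
  have comm: "E2 * D2 = D2 * E2"
  proof -
    have CD: "C2 * D2 = D2 * C2"
    proof -
      have l: "C2 * D2 = D2 + X2 * D2" unfolding C2_def using add_mult_distrib_mat[OF one_carrier_mat X2c cc(4)] cc by simp
      have l2: "X2 * D2 = X2 - X2 * X2" unfolding D2_def using mult_minus_distrib_mat[OF X2c one_carrier_mat X2c] X2c by simp
      have r: "D2 * C2 = C2 - X2 * C2" unfolding D2_def using minus_mult_distrib_mat[OF one_carrier_mat X2c cc(2)] cc by simp
      have r2: "X2 * C2 = X2 + X2 * X2" unfolding C2_def using mult_add_distrib_mat[OF X2c one_carrier_mat X2c] X2c by simp
      show ?thesis unfolding l l2 r r2 unfolding C2_def D2_def using X2c by (intro eq_matI, auto)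
    qed
    have "E2 * D2 = E2 * D2 * (C2 * E2)" unfolding C2_def CE2 using cs by simp
    also have "\<dots> = E2 * (C2 * D2) * E2" unfolding CD using cs by (simp add: assoc)
    also have "\<dots> = (E2 * C2) * D2 * E2" using cs by (simp add: assoc)
    also have "\<dots> = D2 * E2" unfolding C2_def EC2 using cs by simp
    finally show ?thesis .
  qed
  define z where "z = E2 *\<^sub>v b"
  have zc: "z \<in> carrier_vec n" unfolding z_def using cs ac by auto
  have CE2': "C2 * E2 = 1\<^sub>m n" "E2 * C2 = 1\<^sub>m n" unfolding C2_def using CE2 EC2 by auto
  have Cz: "C2 *\<^sub>v z = b" unfolding z_def using assoc_mult_mat_vec[OF cc(2) E2c ac(2), symmetric] CE2' ac by simp
  have Dz: "D2 *\<^sub>v z = k \<cdot>\<^sub>v a"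
  proof -
    have "D2 *\<^sub>v z = (E2 * D2) *\<^sub>v b" unfolding z_def comm using cs ac by simp
    also have "\<dots> = E2 *\<^sub>v m" unfolding mb using cs ac by simp
    also have "\<dots> = k \<cdot>\<^sub>v (E2 *\<^sub>v p)" unfolding mk using mult_mat_vec[OF E2c ac(3)] .
    also have "E2 *\<^sub>v p = a" unfolding pa using assoc_mult_mat_vec[OF E2c cc(2) ac(1), symmetric] CE2' ac by simp
    finally show ?thesis .
  qed
  have h1: "Re (b \<bullet>c b) \<le> Re (a \<bullet>c a)" using psdq_contract[OF X1 x] unfolding a_def b_def C1_def D1_def .
  have h2: "Re ((D2 *\<^sub>v z) \<bullet>c (D2 *\<^sub>v z)) \<le> Re ((C2 *\<^sub>v z) \<bullet>c (C2 *\<^sub>v z))"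
    using psdq_contract[OF X2 zc] unfolding C2_def D2_def .
  have "(cmod k)^2 * Re (a \<bullet>c a) \<le> 1 * Re (a \<bullet>c a)"
    using h1 h2 unfolding Dz Cz cinner_smult[OF ac(1)] by simp
  hence "(cmod k)^2 \<le> 1" using cinner_pos[OF ac(1) a0] by (simp only: mult_le_cancel_right)
  thus "cmod k \<le> 1" by (simp add: power_le_one_iff)
qed

lemma cancel_l: fixes A :: "complex mat" assumes "A * B = 1\<^sub>m n" "A \<in> carrier_mat n n" "B \<in> carrier_mat n n" "X \<in> carrier_mat n m"
  shows "A * (B * X) = X"
proof -
  have "A * (B * X) = (A * B) * X" by (rule assoc_mult_mat[OF assms(2,3,4), symmetric])
  also have "\<dots> = X" unfolding assms(1) by (rule left_mult_one_mat[OF assms(4)])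
  finally show ?thesis .
qed

lemma cancel_sq: fixes A :: "complex mat" assumes "A * B = 1\<^sub>m n" "A \<in> carrier_mat n n" "B \<in> carrier_mat n n" "X \<in> carrier_mat n n"
  shows "A * (B * X) = X"
  using cancel_l[OF assms] .

lemma right_one_sq: "(X :: complex mat) \<in> carrier_mat n n \<Longrightarrow> X * 1\<^sub>m n = X" by simp

lemma alg_invP: fixes C1 :: "complex mat"
  assumes "C1 \<in> carrier_mat n n" "C2 \<in> carrier_mat n n" "E1 \<in> carrier_mat n n" "E2 \<in> carrier_mat n n"
  "C1 * E1 = 1\<^sub>m n" "C2 * E2 = 1\<^sub>m n"
  shows "C2 * C1 * (E1 * E2) = 1\<^sub>m n"
  using assms by (simp add: assoc_mult_mat[of _ n n _ n _ n] mult_sq_carrier cancel_sq[of C1 E1 n])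

lemma alg_RXR: fixes R :: "complex mat"
  assumes "R \<in> carrier_mat n n" "Ri \<in> carrier_mat n n" "P \<in> carrier_mat n n" "R * Ri = 1\<^sub>m n" "Ri * R = 1\<^sub>m n"
  shows "R * (Ri * P * Ri) * R = P"
  using assms by (simp add: assoc_mult_mat[of _ n n _ n _ n] mult_sq_carrier cancel_sq[of R Ri n] right_one_sq)

lemma sandwich: fixes R :: "complex mat"
  assumes R: "R \<in> carrier_mat n n" and X: "X \<in> carrier_mat n n"
  shows "R * (1\<^sub>m n + X) * R = R * R + R * X * R" "R * (1\<^sub>m n - X) * R = R * R - R * X * R"
proof -
  have "R * (1\<^sub>m n + X) = R + R * X" using mult_add_distrib_mat[OF R one_carrier_mat X] R by simp
  thus "R * (1\<^sub>m n + X) * R = R * R + R * X * R" using add_mult_distrib_mat[OF R mult_sq_carrier[OF R X] R] by simp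
  have "R * (1\<^sub>m n - X) = R - R * X" using mult_minus_distrib_mat[OF R one_carrier_mat X] R by simp
  thus "R * (1\<^sub>m n - X) * R = R * R - R * X * R" using minus_mult_distrib_mat[OF R mult_sq_carrier[OF R X] R] by simp
qed

lemma alg_invS: fixes R :: "complex mat"
  assumes "R \<in> carrier_mat n n" "Ri \<in> carrier_mat n n" "C \<in> carrier_mat n n" "E \<in> carrier_mat n n"
   "R * Ri = 1\<^sub>m n" "C * E = 1\<^sub>m n"
  shows "R * C * R * (Ri * E * Ri) = 1\<^sub>m n"
  using assms by (simp add: assoc_mult_mat[of _ n n _ n _ n] mult_sq_carrier cancel_sq[of R Ri n] cancel_sq[of C E n])

lemma alg_Gam: fixes R :: "complex mat"
  assumes "R \<in> carrier_mat n n" "Ri \<in> carrier_mat n n" "E1 \<in> carrier_mat n n" "E2 \<in> carrier_mat n n"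
    "D1 \<in> carrier_mat n n" "D2 \<in> carrier_mat n n" "Ri * R = 1\<^sub>m n" "R * Ri = 1\<^sub>m n"
  shows "Ri * E1 * Ri * (R * D2 * R) * (Ri * E2 * Ri) * (R * D1 * R) = Ri * (E1 * D2 * E2 * D1) * R"
  using assms(1-6) by (simp add: assoc_mult_mat[of _ n n _ n _ n] mult_sq_carrier cancel_sq[OF assms(7) assms(2) assms(1)] cancel_sq[OF assms(8) assms(1) assms(2)])

lemma alg_RG: fixes R :: "complex mat"
  assumes "R \<in> carrier_mat n n" "Ri \<in> carrier_mat n n" "G \<in> carrier_mat n n" "R * Ri = 1\<^sub>m n"
  shows "R * (Ri * G * R) = G * R" "Ri * G * R * Ri = Ri * G"
  using assms by (simp_all add: assoc_mult_mat[of _ n n _ n _ n] mult_sq_carrier cancel_sq[of R Ri n] right_one_sq)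

lemma alg_comm: fixes X :: "complex mat"
  assumes X: "X \<in> carrier_mat n n" and E: "E \<in> carrier_mat n n"
    and CE: "(1\<^sub>m n + X) * E = 1\<^sub>m n" and EC: "E * (1\<^sub>m n + X) = 1\<^sub>m n"
  shows "E * (1\<^sub>m n - X) = (1\<^sub>m n - X) * E"
proof -
  define C where "C = 1\<^sub>m n + X"
  define D where "D = 1\<^sub>m n - X"
  have cc: "C \<in> carrier_mat n n" "D \<in> carrier_mat n n" unfolding C_def D_def using X by auto
  have CE': "C * E = 1\<^sub>m n" "E * C = 1\<^sub>m n" unfolding C_def using CE EC by auto
  have CD: "C * D = D * C"
  proof -
    have l: "C * D = D + X * D" unfolding C_def using add_mult_distrib_mat[OF one_carrier_mat X cc(2)] cc by simp
    have l2: "X * D = X - X * X" unfolding D_def using mult_minus_distrib_mat[OF X one_carrier_mat X] X by simp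
    have r: "D * C = C - X * C" unfolding D_def using minus_mult_distrib_mat[OF one_carrier_mat X cc(1)] cc by simp
    have r2: "X * C = X + X * X" unfolding C_def using mult_add_distrib_mat[OF X one_carrier_mat X] X by simp
    show ?thesis unfolding l l2 r r2 unfolding C_def D_def using X by (intro eq_matI, auto)
  qed
  have "E * D = E * D * (C * E)" using CE' cc E by simp
  also have "\<dots> = E * (C * D) * E" unfolding CD using cc E
    by (simp add: assoc_mult_mat[of _ n n _ n _ n] mult_sq_carrier)
  also have "\<dots> = (E * C) * D * E" using cc E by (simp add: assoc_mult_mat[of _ n n _ n _ n] mult_sq_carrier)
  also have "\<dots> = D * E" using CE' cc E by simp
  finally show ?thesis unfolding D_def .
qed

lemma alg_MG: fixes E1 :: "complex mat"
  assumes "E1 \<in> carrier_mat n n" "E2 \<in> carrier_mat n n" "D1 \<in> carrier_mat n n" "D2 \<in> carrier_mat n n"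
    "E2 * D2 = D2 * E2"
  shows "E1 * E2 * (D2 * D1) = E1 * D2 * E2 * D1"
proof -
  have h: "E2 * (D2 * D1) = D2 * (E2 * D1)"
  proof -
    have "E2 * (D2 * D1) = (E2 * D2) * D1" by (rule assoc_mult_mat[OF assms(2,4,3), symmetric])
    also have "\<dots> = (D2 * E2) * D1" by (simp only: assms(5))
    also have "\<dots> = D2 * (E2 * D1)" by (rule assoc_mult_mat[OF assms(4,2,3)])
    finally show ?thesis .
  qed
  show ?thesis using assms(1-4) h by (simp add: assoc_mult_mat[of _ n n _ n _ n] mult_sq_carrier)
qed

lemma main_part: fixes n :: nat and A P1 P2 S :: "complex mat"
  assumes n: "0 < n"
    and split: "A = P1 + P2"
    and psd1: "pos_semidef n P1" and psd2: "pos_semidef n P2"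
    and hpd: "hermitian_pd n S"
  defines "M \<equiv> minv n (Pplus n S P1 P2) * Pminus n S P1 P2"
  shows "spectrum (Gamma_PPS n S P1 P2) = spectrum M"
    "M \<in> carrier_mat n n"
    "\<And>x k. eigenvector M x k \<Longrightarrow> r1 n S P1 P2 x + r2 n S P1 P2 x > 0 \<and>
        r1 n S P1 P2 x - r2 n S P1 P2 x = (cmod k)^2 * (r1 n S P1 P2 x + r2 n S P1 P2 x) \<and> cmod k \<le> 1"
proof -
  define R where "R = msqrt n S"
  define Ri where "Ri = minv n R"
  have Rpd: "hermitian_pd n R" and RR: "R * R = S" using msqrt_props[OF hpd] unfolding R_def by auto
  have Rc: "R \<in> carrier_mat n n" and Rh: "adj R = R" using Rpd unfolding hermitian_pd_def hermitian_mat_def by auto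
  have Sc: "S \<in> carrier_mat n n" using hpd unfolding hermitian_pd_def by auto
  have P1c: "P1 \<in> carrier_mat n n" and P2c: "P2 \<in> carrier_mat n n" using psd1 psd2 unfolding pos_semidef_def by auto
  have Rinj: "v = 0\<^sub>v n" if "v \<in> carrier_vec n" "R *\<^sub>v v = 0\<^sub>v n" for v
  proof (rule ccontr)
    assume "v \<noteq> 0\<^sub>v n"
    hence "Re (qform R v) > 0" using Rpd that unfolding hermitian_pd_def by auto
    thus False using that unfolding qform_def by (simp add: scalar_prod_def)
  qed
  note Ri = minv_props[OF Rc Rinj, folded Ri_def]
  have Rih: "adj Ri = Ri"
  proof -
    have "R * adj Ri = adj (Ri * R)" using adj_mult[OF Ri(1) Rc] Rh by simp
    hence "R * adj Ri = 1\<^sub>m n" using Ri by simp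
    from minv_eq[OF Rc _ this] Ri_def show ?thesis using Ri(1) by simp
  qed
  define X1 where "X1 = Ri * P1 * Ri"
  define X2 where "X2 = Ri * P2 * Ri"
  have tX: "tld n S P1 = X1" "tld n S P2 = X2" unfolding tld_def X1_def X2_def R_def Ri_def by auto
  have X1: "psdq n X1" unfolding X1_def by (rule psdq_tilde[OF psd1 Ri(1) Rih])
  have X2: "psdq n X2" unfolding X2_def by (rule psdq_tilde[OF psd2 Ri(1) Rih])
  have X1c: "X1 \<in> carrier_mat n n" and X2c: "X2 \<in> carrier_mat n n" using X1 X2 unfolding psdq_def by auto
  have tA: "tld n S (P1 + P2) = X1 + X2"
    unfolding tld_def R_def[symmetric] Ri_def[symmetric] X1_def X2_def
    using Ri(1) P1c P2c
    by (simp add: mult_add_distrib_mat[of _ n n] add_mult_distrib_mat[of _ n n])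
  define C1 where "C1 = 1\<^sub>m n + X1"
  define C2 where "C2 = 1\<^sub>m n + X2"
  define D1 where "D1 = 1\<^sub>m n - X1"
  define D2 where "D2 = 1\<^sub>m n - X2"
  have cc: "C1 \<in> carrier_mat n n" "C2 \<in> carrier_mat n n" "D1 \<in> carrier_mat n n" "D2 \<in> carrier_mat n n"
    unfolding C1_def C2_def D1_def D2_def using X1c X2c by auto
  define E1 where "E1 = minv n C1"
  define E2 where "E2 = minv n C2"
  note E1 = minv_props[OF cc(1) psdq_inj[OF X1, folded C1_def], folded E1_def]
  note E2 = minv_props[OF cc(2) psdq_inj[OF X2, folded C2_def], folded E2_def]
  note assoc = assoc_mult_mat[of _ n n _ n _ n]
  note cs = cc E1(1) E2(1) X1c X2c Rc Ri(1) P1c P2c Sc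
  have PP: "Pplus n S P1 P2 = C2 * C1" "Pminus n S P1 P2 = D2 * D1"
    unfolding Pplus_def Pminus_def tX C1_def C2_def D1_def D2_def by auto
  have invP: "minv n (C2 * C1) = E1 * E2"
  proof (rule minv_eq)
    show "C2 * C1 * (E1 * E2) = 1\<^sub>m n" by (rule alg_invP[OF cc(1,2) E1(1) E2(1) E1(2) E2(2)])
  qed (use cs in auto)
  have Mdef: "M = E1 * E2 * (D2 * D1)" unfolding M_def PP invP ..
  show Mc: "M \<in> carrier_mat n n" unfolding Mdef using cs by auto
  have RXR1: "R * X1 * R = P1" unfolding X1_def by (rule alg_RXR[OF Rc Ri(1) P1c Ri(2,3)])
  have RXR2: "R * X2 * R = P2" unfolding X2_def by (rule alg_RXR[OF Rc Ri(1) P2c Ri(2,3)])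
  note RXR = RXR1 RXR2
  have SP: "S + P1 = R * C1 * R" "S - P2 = R * D2 * R" "S + P2 = R * C2 * R" "S - P1 = R * D1 * R"
    unfolding C1_def C2_def D1_def D2_def RR[symmetric] RXR[symmetric] sandwich[OF Rc X1c] sandwich[OF Rc X2c] by auto
  have invS: "minv n (S + P1) = Ri * E1 * Ri" "minv n (S + P2) = Ri * E2 * Ri"
  proof -
    show "minv n (S + P1) = Ri * E1 * Ri" unfolding SP
      by (rule minv_eq[OF _ _ alg_invS[OF Rc Ri(1) cc(1) E1(1) Ri(2) E1(2)]]) (use cs in auto)
    show "minv n (S + P2) = Ri * E2 * Ri" unfolding SP
      by (rule minv_eq[OF _ _ alg_invS[OF Rc Ri(1) cc(2) E2(1) Ri(2) E2(2)]]) (use cs in auto)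
  qed
  have comm: "E2 * D2 = D2 * E2" unfolding D2_def
    by (rule alg_comm[OF X2c E2(1) E2(2)[unfolded C2_def] E2(3)[unfolded C2_def]])
  define G where "G = E1 * D2 * E2 * D1"
  have Gc: "G \<in> carrier_mat n n" unfolding G_def using cs by auto
  have MG: "M = G" unfolding Mdef G_def by (rule alg_MG[OF E1(1) E2(1) cc(3,4) comm])
  have Gam: "Gamma_PPS n S P1 P2 = Ri * G * R"
    unfolding Gamma_PPS_def invS unfolding SP G_def by (rule alg_Gam[OF Rc Ri(1) E1(1) E2(1) cc(3,4) Ri(3) Ri(2)])
  have Gamc: "Gamma_PPS n S P1 P2 \<in> carrier_mat n n" unfolding Gam using cs Gc by auto
  have RG: "R * Gamma_PPS n S P1 P2 = G * R" unfolding Gam by (rule alg_RG(1)[OF Rc Ri(1) Gc Ri(2)])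
  have GR: "Gamma_PPS n S P1 P2 * Ri = Ri * G" unfolding Gam by (rule alg_RG(2)[OF Rc Ri(1) Gc Ri(2)])
  show "spectrum (Gamma_PPS n S P1 P2) = spectrum M"
  proof -
    have "eigenvalue (Gamma_PPS n S P1 P2) k \<longleftrightarrow> eigenvalue G k" for k
    proof
      assume "eigenvalue (Gamma_PPS n S P1 P2) k"
      then obtain v where v: "v \<in> carrier_vec n" "v \<noteq> 0\<^sub>v n" "Gamma_PPS n S P1 P2 *\<^sub>v v = k \<cdot>\<^sub>v v"
        unfolding eigenvalue_def eigenvector_def using Gamc by auto
      have "G *\<^sub>v (R *\<^sub>v v) = (G * R) *\<^sub>v v" using cs Gc v by simp
      also have "\<dots> = R *\<^sub>v (Gamma_PPS n S P1 P2 *\<^sub>v v)" unfolding RG[symmetric] using cs Gamc v by simp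
      also have "\<dots> = k \<cdot>\<^sub>v (R *\<^sub>v v)" unfolding v(3) using mult_mat_vec[OF Rc v(1)] .
      finally have e: "G *\<^sub>v (R *\<^sub>v v) = k \<cdot>\<^sub>v (R *\<^sub>v v)" .
      have "R *\<^sub>v v \<noteq> 0\<^sub>v n" using Rinj v by auto
      thus "eigenvalue G k" unfolding eigenvalue_def eigenvector_def
        by (intro exI[of _ "R *\<^sub>v v"]) (use e Gc Rc v in auto)
    next
      assume "eigenvalue G k"
      then obtain v where v: "v \<in> carrier_vec n" "v \<noteq> 0\<^sub>v n" "G *\<^sub>v v = k \<cdot>\<^sub>v v"
        unfolding eigenvalue_def eigenvector_def using Gc by auto
      have "Gamma_PPS n S P1 P2 *\<^sub>v (Ri *\<^sub>v v) = (Gamma_PPS n S P1 P2 * Ri) *\<^sub>v v" using cs Gamc v by simp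
      also have "\<dots> = Ri *\<^sub>v (G *\<^sub>v v)" unfolding GR using cs Gc v by simp
      also have "\<dots> = k \<cdot>\<^sub>v (Ri *\<^sub>v v)" unfolding v(3) using mult_mat_vec[OF Ri(1) v(1)] .
      finally have e: "Gamma_PPS n S P1 P2 *\<^sub>v (Ri *\<^sub>v v) = k \<cdot>\<^sub>v (Ri *\<^sub>v v)" .
      have "Ri *\<^sub>v v \<noteq> 0\<^sub>v n"
      proof
        assume "Ri *\<^sub>v v = 0\<^sub>v n"
        hence "R *\<^sub>v (Ri *\<^sub>v v) = 0\<^sub>v n" using Rc by simp
        moreover have "R *\<^sub>v (Ri *\<^sub>v v) = v" using assoc_mult_mat_vec[OF Rc Ri(1) v(1), symmetric] Ri v by simp
        ultimately show False using v by simp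
      qed
      thus "eigenvalue (Gamma_PPS n S P1 P2) k" unfolding eigenvalue_def eigenvector_def
        by (intro exI[of _ "Ri *\<^sub>v v"]) (use e Gamc Ri v in auto)
    qed
    thus ?thesis unfolding spectrum_def MG by auto
  qed
  fix x k assume ev: "eigenvector M x k"
  hence x: "x \<in> carrier_vec n" "x \<noteq> 0\<^sub>v n" "M *\<^sub>v x = k \<cdot>\<^sub>v x" using Mc unfolding eigenvector_def by auto
  have r12: "r1 n S P1 P2 x = Re (qform (1\<^sub>m n + adj (X1 + X2) * (X1 + X2) + X2 * X1 + adj X1 * adj X2 + adj X1 * adj X2 * X2 * X1) x)"
     "r2 n S P1 P2 x = Re (qform ((X1 + X2) + adj (X1 + X2) + adj (X1 + X2) * X2 * X1 + adj X1 * adj X2 * (X1 + X2)) x)"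
    unfolding r1_def r2_def Let_def tX tA by auto
  have rr: "r1 n S P1 P2 x + r2 n S P1 P2 x = Re ((((1\<^sub>m n + X2) * (1\<^sub>m n + X1)) *\<^sub>v x) \<bullet>c (((1\<^sub>m n + X2) * (1\<^sub>m n + X1)) *\<^sub>v x))"
     "r1 n S P1 P2 x - r2 n S P1 P2 x = Re ((((1\<^sub>m n - X2) * (1\<^sub>m n - X1)) *\<^sub>v x) \<bullet>c (((1\<^sub>m n - X2) * (1\<^sub>m n - X1)) *\<^sub>v x))"
    unfolding r12 plus_complex.sel(1)[symmetric] minus_complex.sel(1)[symmetric] r_sum[OF X1c X2c x(1)] by (rule refl)+
  have ea: "(E1 * E2 * ((1\<^sub>m n - X2) * (1\<^sub>m n - X1))) *\<^sub>v x = k \<cdot>\<^sub>v x" using x(3) unfolding Mdef D1_def D2_def .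
  note res = eig_analysis[OF X1 X2 E1(1) E2(1) E1(2)[unfolded C1_def] E1(3)[unfolded C1_def]
      E2(2)[unfolded C2_def] E2(3)[unfolded C2_def] x(1) x(2) ea]
  show "r1 n S P1 P2 x + r2 n S P1 P2 x > 0 \<and>
        r1 n S P1 P2 x - r2 n S P1 P2 x = (cmod k)^2 * (r1 n S P1 P2 x + r2 n S P1 P2 x) \<and> cmod k \<le> 1"
    unfolding rr using res by blast
qed

theorem theorem3p4:
  fixes n :: nat and A P1 P2 S :: "complex mat"
  assumes n: "0 < n"
    and A: "A \<in> carrier_mat n n" and nonsing: "invertible_mat A"
    and split: "A = P1 + P2"
    and psd1: "pos_semidef n P1" and psd2: "pos_semidef n P2"
    and hpd: "hermitian_pd n S"
  shows "(\<forall>x \<in> ev (minv n (Pplus n S P1 P2) * Pminus n S P1 P2).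
            r1 n S P1 P2 x \<ge> r2 n S P1 P2 x \<and> r2 n S P1 P2 x \<ge> 0 \<and> r1 n S P1 P2 x > 0)
    \<and> spectral_radius (Gamma_PPS n S P1 P2)
        \<in> {sqrt ((r1 n S P1 P2 x - r2 n S P1 P2 x) / (r1 n S P1 P2 x + r2 n S P1 P2 x)) | x.
              x \<in> ev (minv n (Pplus n S P1 P2) * Pminus n S P1 P2)}
    \<and> (\<forall>x \<in> ev (minv n (Pplus n S P1 P2) * Pminus n S P1 P2).
          sqrt ((r1 n S P1 P2 x - r2 n S P1 P2 x) / (r1 n S P1 P2 x + r2 n S P1 P2 x))
            \<le> spectral_radius (Gamma_PPS n S P1 P2))
    \<and> (spectral_radius (Gamma_PPS n S P1 P2) < 1 \<longleftrightarrow>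
         (\<forall>x \<in> ev (minv n (Pplus n S P1 P2) * Pminus n S P1 P2). r2 n S P1 P2 x \<noteq> 0))"
proof -
  define M where "M = minv n (Pplus n S P1 P2) * Pminus n S P1 P2"
  note mp = main_part[OF n split psd1 psd2 hpd, folded M_def]
  define f where "f x = sqrt ((r1 n S P1 P2 x - r2 n S P1 P2 x) / (r1 n S P1 P2 x + r2 n S P1 P2 x))" for x
  define \<rho> where "\<rho> = spectral_radius M"
  have rho: "spectral_radius (Gamma_PPS n S P1 P2) = \<rho>" unfolding \<rho>_def spectral_radius_def mp(1) ..
  note sm = spectral_radius_mem_max[OF mp(2) n, folded \<rho>_def]
  have key: "r1 n S P1 P2 x \<ge> r2 n S P1 P2 x \<and> r2 n S P1 P2 x \<ge> 0 \<and> r1 n S P1 P2 x > 0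
      \<and> f x = cmod k \<and> cmod k \<le> 1 \<and> (r2 n S P1 P2 x = 0 \<longleftrightarrow> cmod k = 1)"
    if ev: "eigenvector M x k" for x k
  proof -
    define a where "a = r1 n S P1 P2 x"
    define b where "b = r2 n S P1 P2 x"
    define c where "c = (cmod k)^2"
    have h: "a + b > 0" "a - b = c * (a + b)" "cmod k \<le> 1" using mp(3)[OF ev] unfolding a_def b_def c_def by auto
    have c0: "c \<ge> 0" "c \<le> 1" unfolding c_def using h(3) by (auto simp: power_le_one)
    have "c * (a + b) \<le> a + b" using c0 h(1) by (simp add: mult_le_cancel_right1)
    moreover have "c * (a + b) \<ge> 0" using c0 h(1) by simp
    ultimately have 1: "a \<ge> b" "b \<ge> 0" "a > 0" using h by linarith+
    have "(a - b) / (a + b) = c" using h by simp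
    hence 2: "f x = cmod k" unfolding f_def a_def[symmetric] b_def[symmetric] c_def by simp
    have "b = 0 \<longleftrightarrow> c = 1"
    proof
      assume "b = 0" thus "c = 1" using h by simp
    next
      assume "c = 1" thus "b = 0" using h by simp
    qed
    hence 3: "b = 0 \<longleftrightarrow> cmod k = 1" unfolding c_def using norm_ge_zero[of k] by (auto simp: power2_eq_1_iff)
    show ?thesis using 1 2 3 h(3) unfolding a_def b_def by auto
  qed
  have evk: "\<exists>k. eigenvector M x k \<and> k \<in> spectrum M" if "x \<in> ev M" for x
    using that unfolding ev_def spectrum_def eigenvalue_def by auto
  have c1: "\<forall>x \<in> ev M. r1 n S P1 P2 x \<ge> r2 n S P1 P2 x \<and> r2 n S P1 P2 x \<ge> 0 \<and> r1 n S P1 P2 x > 0"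
    using evk key by blast
  obtain lam where lam: "lam \<in> spectrum M" "\<rho> = cmod lam" using sm(1) by auto
  then obtain x0 where x0: "eigenvector M x0 lam" unfolding spectrum_def eigenvalue_def by auto
  have x0ev: "x0 \<in> ev M" unfolding ev_def using x0 by auto
  have c2: "\<rho> \<in> {f x | x. x \<in> ev M}" using key[OF x0] lam x0ev by (intro CollectI exI[of _ x0]) auto
  have le: "f x \<le> \<rho>" if xe: "x \<in> ev M" for x
  proof -
    obtain k where k: "eigenvector M x k" "k \<in> spectrum M" using evk[OF xe] by auto
    show ?thesis using key[OF k(1)] sm(2)[of "cmod k"] k(2) by auto
  qed
  have c4: "\<rho> < 1 \<longleftrightarrow> (\<forall>x \<in> ev M. r2 n S P1 P2 x \<noteq> 0)"
  proof
    assume r: "\<rho> < 1"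
    show "\<forall>x \<in> ev M. r2 n S P1 P2 x \<noteq> 0"
    proof
      fix x assume "x \<in> ev M"
      then obtain k where k: "eigenvector M x k" "k \<in> spectrum M" using evk by blast
      have "cmod k \<le> \<rho>" using sm(2)[of "cmod k"] k(2) by auto
      thus "r2 n S P1 P2 x \<noteq> 0" using key[OF k(1)] r by auto
    qed
  next
    assume "\<forall>x \<in> ev M. r2 n S P1 P2 x \<noteq> 0"
    hence "r2 n S P1 P2 x0 \<noteq> 0" using x0ev by auto
    thus "\<rho> < 1" using key[OF x0] lam(2) by auto
  qed
  show ?thesis unfolding rho M_def[symmetric] f_def[symmetric] using c1 c2 le c4 by blast
qed

end
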